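(* Let $L$ be a finite simplicial complex and $L^\circ=L\cup\{\varnothing\}$. For $x\in L^\circ$ put $\mu_L(x)=1-\chi(\operatorname{lk}_Lx)$, with the convention $\operatorname{lk}_L\varnothing=L$. Then for all $y,z\in L^\circ$, $$\sum_{x\in L^\circ,\ x\cap y=z}\mu_L(x)=\begin{cases}1&\text{if } y=z,\\0&\text{otherwise.}\end{cases}$$
   Context: $\chi$ is the Euler characteristic and $\operatorname{lk}_Lx$ the link of the simplex $x$ in $L$ (the empty complex has $\chi=0$). The intersection of two simplices of $L$ is a common face or empty, hence an element of $L^\circ$. *)

theory Defs
  imports Main
begin

definition simplicial_complex :: "'a set set \<Rightarrow> bool" where
  "simplicial_complex L \<longleftrightarrow>
     (\<forall>s\<in>L. finite s \<and> s \<noteq> {}) \<and>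
     (\<forall>s\<in>L. \<forall>t. t \<subseteq> s \<and> t \<noteq> {} \<longrightarrow> t \<in> L)"

definition finite_simplicial_complex :: "'a set set \<Rightarrow> bool" where
  "finite_simplicial_complex L \<longleftrightarrow> simplicial_complex L \<and> finite L"

definition euler_char :: "'a set set \<Rightarrow> int" where
  "euler_char K = (\<Sum>s\<in>K. (-1) ^ (card s - 1))"

text \<open>Link of a simplex x in L; for x = {} this is L itself.\<close>
definition link :: "'a set set \<Rightarrow> 'a set \<Rightarrow> 'a set set" where
  "link L x = {s \<in> L. s \<inter> x = {} \<and> s \<union> x \<in> L}"

definition mu :: "'a set set \<Rightarrow> 'a set \<Rightarrow> int" where
  "mu L x = 1 - euler_char (link L x)"

end

theory Submission
  imports Defs
begin

definition sg :: "'a set \<Rightarrow> int" where "sg x = (-1) ^ card x"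

lemma sg_sq: "sg x * sg x = 1"
  unfolding sg_def by (simp add: power_mult_distrib[symmetric])

lemma sg_union: "finite a \<Longrightarrow> finite b \<Longrightarrow> a \<inter> b = {} \<Longrightarrow> sg (a \<union> b) = sg a * sg b"
  unfolding sg_def by (simp add: card_Un_disjoint power_add)

lemma lemC:
  assumes "finite D" "finite z" "z \<inter> D = {}"
  shows "(\<Sum>x\<in>{x. z \<subseteq> x \<and> x \<subseteq> z \<union> D}. sg x) = (if D = {} then sg z else 0)"
  using assms
proof (induction D rule: finite_induct)
  case empty
  have "{x. z \<subseteq> x \<and> x \<subseteq> z \<union> {}} = {z}" by auto
  then show ?case by simp
next
  case (insert a D)
  define S where "S = {x. z \<subseteq> x \<and> x \<subseteq> z \<union> D}"
  have az: "a \<notin> z" using insert by auto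
  have fS: "finite S" unfolding S_def
    by (rule finite_subset[of _ "Pow (z \<union> D)"]) (use insert in auto)
  have eq: "{x. z \<subseteq> x \<and> x \<subseteq> z \<union> insert a D} = S \<union> insert a ` S"
  proof (rule set_eqI, rule iffI)
    fix x assume "x \<in> {x. z \<subseteq> x \<and> x \<subseteq> z \<union> insert a D}"
    then have x: "z \<subseteq> x" "x \<subseteq> z \<union> insert a D" by auto
    show "x \<in> S \<union> insert a ` S"
    proof (cases "a \<in> x")
      case True
      have "x - {a} \<in> S" using x az insert.hyps unfolding S_def by auto
      moreover have "x = insert a (x - {a})" using True by auto
      ultimately show ?thesis by blast
    next
      case False then show ?thesis using x unfolding S_def by auto
    qed
  qed (auto simp: S_def)
  have disj: "S \<inter> insert a ` S = {}" using az insert.hyps unfolding S_def by auto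
  have inj: "inj_on (insert a) S"
  proof (rule inj_onI)
    fix x1 x2 assume "x1 \<in> S" "x2 \<in> S" "insert a x1 = insert a x2"
    moreover have "a \<notin> x1" "a \<notin> x2" using calculation az insert.hyps unfolding S_def by auto
    ultimately show "x1 = x2" by (metis Diff_insert_absorb)
  qed
  have fx: "finite x" if "x \<in> S" for x
  proof -
    have "x \<subseteq> z \<union> D" using that by (simp add: S_def)
    then show ?thesis by (rule finite_subset) (use insert in simp)
  qed
  have "(\<Sum>x\<in>insert a ` S. sg x) = (\<Sum>x\<in>S. sg (insert a x))"
    using sum.reindex[OF inj] by simp
  also have "\<dots> = (\<Sum>x\<in>S. - sg x)"
  proof (rule sum.cong)
    fix x assume "x \<in> S"
    then have "a \<notin> x" "finite x" using az insert.hyps fx unfolding S_def by auto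
    then show "sg (insert a x) = - sg x" unfolding sg_def by simp
  qed simp
  finally have z0: "(\<Sum>x\<in>S \<union> insert a ` S. sg x) = 0"
    using sum.union_disjoint[OF fS finite_imageI[OF fS] disj, of sg]
    by (simp add: sum_negf)
  have ne: "(insert a D = {}) = False" by simp
  show ?case unfolding eq ne if_False by (rule z0)
qed

lemma lemB:
  assumes L: "finite_simplicial_complex L" and x: "x \<in> insert {} L"
  shows "mu L x = (\<Sum>w\<in>{w \<in> insert {} L. x \<subseteq> w}. sg w * sg x)"
proof -
  have sc: "\<forall>s\<in>L. finite s \<and> s \<noteq> {}" "\<forall>s\<in>L. \<forall>t. t \<subseteq> s \<and> t \<noteq> {} \<longrightarrow> t \<in> L"
    and fL: "finite L"
    using L unfolding finite_simplicial_complex_def simplicial_complex_def by blast+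
  have fx: "finite x" using x sc(1) by blast
  have flk: "finite (link L x)" using fL unfolding link_def by simp
  have ne: "{} \<notin> link L x" using sc(1) unfolding link_def by blast
  have "euler_char (link L x) = (\<Sum>s\<in>link L x. - sg s)"
    unfolding euler_char_def
  proof (rule sum.cong)
    fix s assume "s \<in> link L x"
    then have "finite s" "s \<noteq> {}" using sc unfolding link_def by auto
    then have "card s = Suc (card s - 1)" by (simp add: card_gt_0_iff)
    then have "sg s = (-1) * (-1) ^ (card s - 1)" unfolding sg_def by (metis power_Suc)
    then show "(-1) ^ (card s - 1) = - sg s" by simp
  qed simp
  then have "mu L x = (\<Sum>s\<in>insert {} (link L x). sg s)"
    unfolding mu_def using flk ne by (simp add: sum_negf sg_def)
  also have "\<dots> = (\<Sum>w\<in>{w \<in> insert {} L. x \<subseteq> w}. sg w * sg x)"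
  proof (rule sum.reindex_bij_witness[where j="\<lambda>s. s \<union> x" and i="\<lambda>w. w - x"], goal_cases)
    case (1 s) then show ?case unfolding link_def by auto
  next
    case (2 s) then show ?case using x unfolding link_def by auto
  next
    case (3 w) then show ?case by auto
  next
    case (4 w)
    show ?case
    proof (cases "w - x = {}")
      case False
      have "w \<in> L" using 4 False by auto
      then have "w - x \<in> L" using sc(2) False by (meson Diff_subset)
      then show ?thesis using 4 unfolding link_def by (auto simp: Un_absorb2)
    next
      case True then show ?thesis by simp
    qed
  next
    case (5 s)
    have fs: "finite s" "s \<inter> x = {}"
      using 5 sc(1) unfolding link_def by auto
    have "sg (s \<union> x) = sg s * sg x"
      by (rule sg_union) (use fs fx in auto)
    then have "sg (s \<union> x) * sg x = sg s * (sg x * sg x)" by (simp add: mult.assoc)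
    then show ?case by (simp add: sg_sq)
  qed
  finally show ?thesis .
qed

theorem mainTheorem9:
  fixes L :: "'a set set" and y z :: "'a set"
  assumes "finite_simplicial_complex L"
    and "y \<in> insert {} L" and "z \<in> insert {} L"
  shows "(\<Sum>x\<in>{x \<in> insert {} L. x \<inter> y = z}. mu L x) = (if y = z then 1 else 0)"
proof -
  have sc: "\<forall>s\<in>L. finite s \<and> s \<noteq> {}" "\<forall>s\<in>L. \<forall>t. t \<subseteq> s \<and> t \<noteq> {} \<longrightarrow> t \<in> L"
    and fL: "finite L"
    using assms(1) unfolding finite_simplicial_complex_def simplicial_complex_def by blast+
  have fy: "finite y" using assms(2) sc(1) by blast
  have fz: "finite z" using assms(3) sc(1) by blast
  have subL: "\<And>w t. w \<in> insert {} L \<Longrightarrow> t \<subseteq> w \<Longrightarrow> t \<in> insert {} L"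
    using sc by blast
  show ?thesis
  proof (cases "z \<subseteq> y")
    case False
    then have e: "{x \<in> insert {} L. x \<inter> y = z} = {}" by blast
    have "y \<noteq> z" using False by blast
    then show ?thesis unfolding e by simp
  next
    case zy: True
    let ?A = "insert {} L"
    have fA: "finite ?A" using fL by simp
    have "(\<Sum>x\<in>{x \<in> ?A. x \<inter> y = z}. mu L x)
        = (\<Sum>x\<in>{x \<in> ?A. x \<inter> y = z}. \<Sum>w\<in>{w \<in> ?A. x \<subseteq> w}. sg w * sg x)"
      by (rule sum.cong) (simp_all add: lemB[OF assms(1)])
    also have "\<dots> = (\<Sum>w\<in>?A. \<Sum>x\<in>{x \<in> {x \<in> ?A. x \<inter> y = z}. x \<subseteq> w}. sg w * sg x)"
      by (rule sum.swap_restrict) (use fA in simp_all)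
    also have "\<dots> = (\<Sum>w\<in>?A. if z \<subseteq> w \<and> w \<subseteq> y then sg w * sg z else 0)"
    proof (rule sum.cong)
      fix w assume w: "w \<in> ?A"
      have fw: "finite w" using w sc(1) by blast
      show "(\<Sum>x\<in>{x \<in> {x \<in> ?A. x \<inter> y = z}. x \<subseteq> w}. sg w * sg x)
          = (if z \<subseteq> w \<and> w \<subseteq> y then sg w * sg z else 0)"
      proof (cases "z \<subseteq> w")
        case False
        then have e: "{x \<in> {x \<in> ?A. x \<inter> y = z}. x \<subseteq> w} = {}" by blast
        show ?thesis unfolding e using False by simp
      next
        case zw: True
        have eq: "{x \<in> {x \<in> ?A. x \<inter> y = z}. x \<subseteq> w} = {x. z \<subseteq> x \<and> x \<subseteq> z \<union> (w - y)}"
        proof (rule set_eqI, rule iffI)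
          fix x assume "x \<in> {x. z \<subseteq> x \<and> x \<subseteq> z \<union> (w - y)}"
          then have x: "z \<subseteq> x" "x \<subseteq> z \<union> (w - y)" by auto
          have "x \<subseteq> w" using x zw by auto
          moreover have "x \<inter> y = z" using x zy by auto
          ultimately show "x \<in> {x \<in> {x \<in> ?A. x \<inter> y = z}. x \<subseteq> w}"
            using subL[OF w] by auto
        qed auto
        have "(\<Sum>x\<in>{x \<in> {x \<in> ?A. x \<inter> y = z}. x \<subseteq> w}. sg w * sg x)
            = sg w * (\<Sum>x\<in>{x. z \<subseteq> x \<and> x \<subseteq> z \<union> (w - y)}. sg x)"
          unfolding eq by (simp add: sum_distrib_left)
        also have "\<dots> = sg w * (if w - y = {} then sg z else 0)"
        proof -
          have "z \<inter> (w - y) = {}" using zy by blast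
          moreover have "finite (w - y)" using fw by simp
          ultimately show ?thesis using lemC[of "w - y" z] fz by simp
        qed
        finally show ?thesis using zw by auto
      qed
    qed simp
    also have "\<dots> = (\<Sum>w\<in>{w \<in> ?A. z \<subseteq> w \<and> w \<subseteq> y}. sg w * sg z)"
      by (simp only: sum.inter_filter[OF fA])
    also have "{w \<in> ?A. z \<subseteq> w \<and> w \<subseteq> y} = {w. z \<subseteq> w \<and> w \<subseteq> z \<union> (y - z)}"
      using subL[OF assms(2)] zy by auto
    also have "(\<Sum>w\<in>{w. z \<subseteq> w \<and> w \<subseteq> z \<union> (y - z)}. sg w * sg z)
        = (\<Sum>w\<in>{w. z \<subseteq> w \<and> w \<subseteq> z \<union> (y - z)}. sg w) * sg z"
      by (simp add: sum_distrib_right)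
    also have "\<dots> = (if y - z = {} then sg z * sg z else 0)"
      using lemC[of "y - z" z] fy fz by auto
    also have "\<dots> = (if y = z then 1 else 0)"
      using zy sg_sq by auto
    finally show ?thesis .
  qed
qed

end
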